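(* Suppose Assumption A holds and Assumption B holds for some $p\ge2$. Let $\{(x^k,m^k)\}_{k\ge0}$ be generated by Algorithm 1 with $q=p-1$, step sizes $\{\eta_k\}_{k\ge0}$, and parameters $\{(\gamma_{k,t},\theta_{k,t})\}_{1\le t\le p-1,k\ge0}$ satisfying, for all $k\ge0$, $\sum_{t=1}^{p-1}\theta_{k,t}/\gamma_{k,t}^{j}=1$ for $j=1,\dots,p-1$ and $\sum_{t=1}^{p-1}\theta_{k,t}\in(0,1)$. Then for all $k\ge0$, \[ \mathbb{E}_{\xi^{k+1}}[\|m^{k+1}-\nabla f(x^{k+1})\|^2]\le\Big(1-\sum_{t=1}^{p-1}\theta_{k,t}\Big)\|m^k-\nabla f(x^k)\|^2+\frac{pL_p^2\eta_k^{2p}}{(p!)^2\sum_{t=1}^{p-1}\theta_{k,t}}\Big(1+\sum_{t=1}^{p-1}\frac{\theta_{k,t}^2}{\gamma_{k,t}^{2p}}\Big)+(p-1)\sigma^2\sum_{t=1}^{p-1}\theta_{k,t}^2 . \]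
   Context: Problem: minimize $f:\mathbb{R}^n\to\mathbb{R}$, where only a stochastic gradient estimator $G(\cdot;\xi)$ is accessible, $\xi$ being a random variable with sample space $\Xi$. $\|\cdot\|$ is the Euclidean norm. Assumption A: (a) there is a finite $f_{\mathrm{low}}$ with $f(x)\ge f_{\mathrm{low}}$ for all $x$; (b) there is $L_1>0$ with $\|\nabla f(y)-\nabla f(x)\|\le L_1\|y-x\|$ for all $x,y$; (c) $\mathbb{E}_\xi[G(x;\xi)]=\nabla f(x)$ and $\mathbb{E}_\xi[\|G(x;\xi)-\nabla f(x)\|^2]\le\sigma^2$ for all $x$, for some $\sigma>0$. Assumption B: $f$ is $p$ times continuously differentiable for some $p\ge2$ and there is $L_p>0$ with $\|D^pf(y)-D^pf(x)\|_{(p)}\le L_p\|y-x\|$ for all $x,y$, where $D^pf(x)$ is the $p$th derivative as a symmetric $p$-linear form and $\|\mathcal{T}\|_{(p)}=\max\{\mathcal{T}[h_1,\dots,h_p]:\|h_i\|\le 1\}$. Algorithm 1 (SFOM with multi-extrapolated momentum): inputs $x^0\in\mathbb{R}^n$, step sizes $\eta_k>0$, an integer $q\ge1$, extrapolation parameters $\gamma_{k,t}\in(0,1)$ and weighting parameters $\theta_{k,t}\in\mathbb{R}$ ($1\le t\le q$, $k\ge0$) with $\sum_{t=1}^q\theta_{k,t}\in(0,1)$ for all $k\ge0$. Initialize $x^{-1}=x^0$, $m^{-1}=0$, $(\gamma_{-1,t},\theta_{-1,t})=(1,1/q)$ for all $t$. For $k=0,1,2,\dots$: $z^{k,t}=x^k+\frac{1-\gamma_{k-1,t}}{\gamma_{k-1,t}}(x^k-x^{k-1})$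 for $1\le t\le q$; $m^k=(1-\sum_{t=1}^q\theta_{k-1,t})m^{k-1}+\sum_{t=1}^q\theta_{k-1,t}G(z^{k,t};\xi^k)$; $x^{k+1}=x^k-\eta_k m^k/\|m^k\|$. Here $\xi^0,\xi^1,\dots$ are independent samples of $\xi$ (and $m^k\neq0$ is implicitly assumed). $\mathbb{E}_{\xi^{k+1}}[\cdot]$ denotes expectation with respect to $\xi^{k+1}$ conditional on $\xi^0,\dots,\xi^k$. *)

theory Defs
  imports "HOL-Analysis.Analysis" "HOL-Probability.Probability"
begin

text \<open>Higher derivatives of f : R^n -> R (here 'a :: euclidean_space) as symmetric
multilinear forms, evaluated on a list of directions:
  hder 0 f x [] = f x,
  hder (k+1) f x (h # hs) = D (y |-> hder k f y hs)(x)[h].\<close>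
fun hder :: "nat \<Rightarrow> ('a::euclidean_space \<Rightarrow> real) \<Rightarrow> 'a \<Rightarrow> 'a list \<Rightarrow> real" where
  "hder 0 f x hs = f x"
| "hder (Suc k) f x hs = frechet_derivative (\<lambda>y. hder k f y (tl hs)) (at x) (hd hs)"

definition p_times_cont_diff :: "nat \<Rightarrow> ('a::euclidean_space \<Rightarrow> real) \<Rightarrow> bool" where
  "p_times_cont_diff p f \<longleftrightarrow>
     (\<forall>k<p. \<forall>hs. length hs = k \<longrightarrow> (\<forall>x. (\<lambda>y. hder k f y hs) differentiable (at x))) \<and>
     (\<forall>hs. length hs = p \<longrightarrow> continuous_on UNIV (\<lambda>y. hder p f y hs))"

text \<open>Assumption B: Lipschitz continuity of D^p f in the norm
  ||T||_(p) = max { T[h_1,...,h_p] : ||h_i|| <= 1 }, written out pointwise.\<close>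
definition assumption_B :: "nat \<Rightarrow> real \<Rightarrow> ('a::euclidean_space \<Rightarrow> real) \<Rightarrow> bool" where
  "assumption_B p Lp f \<longleftrightarrow> 2 \<le> p \<and> p_times_cont_diff p f \<and> Lp > 0 \<and>
     (\<forall>x y hs. length hs = p \<and> (\<forall>h\<in>set hs. norm h \<le> 1) \<longrightarrow>
        hder p f y hs - hder p f x hs \<le> Lp * norm (y - x))"

definition assumption_A ::
  "('a::euclidean_space \<Rightarrow> real) \<Rightarrow> ('a \<Rightarrow> 'a) \<Rightarrow> ('a \<Rightarrow> 'b \<Rightarrow> 'a) \<Rightarrow> 'b measure
    \<Rightarrow> real \<Rightarrow> real \<Rightarrow> bool" where
  "assumption_A f gf G M L1 \<sigma> \<longleftrightarrow>
     (\<exists>flow. \<forall>x. f x \<ge> flow) \<and>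
     (\<forall>x. GDERIV f x :> gf x) \<and>
     L1 > 0 \<and> (\<forall>x y. norm (gf y - gf x) \<le> L1 * norm (y - x)) \<and>
     \<sigma> > 0 \<and>
     (\<forall>x. integrable M (G x) \<and> (\<integral>\<omega>. G x \<omega> \<partial>M) = gf x \<and>
          (\<integral>\<^sup>+\<omega>. ennreal ((norm (G x \<omega> - gf x))\<^sup>2) \<partial>M) \<le> ennreal (\<sigma>\<^sup>2))"

text \<open>Algorithm 1.  State at step k is (x^{k-1}, x^k, m^{k-1}); parameters at index
k-1 = -1 are (gamma,theta) = (1, 1/q).  xi is the sequence of samples.\<close>
definition zpt :: "real \<Rightarrow> 'a::real_vector \<Rightarrow> 'a \<Rightarrow> 'a" where
  "zpt g xprev x = x + ((1 - g) / g) *\<^sub>R (x - xprev)"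

fun alg1 :: "('a::real_normed_vector \<Rightarrow> 'b \<Rightarrow> 'a) \<Rightarrow> nat \<Rightarrow> 'a \<Rightarrow> (nat \<Rightarrow> real)
    \<Rightarrow> (nat \<Rightarrow> nat \<Rightarrow> real) \<Rightarrow> (nat \<Rightarrow> nat \<Rightarrow> real) \<Rightarrow> (nat \<Rightarrow> 'b) \<Rightarrow> nat \<Rightarrow> 'a \<times> 'a \<times> 'a" where
  "alg1 G q x0 \<eta> \<gamma> \<theta> \<xi> 0 = (x0, x0, 0)"
| "alg1 G q x0 \<eta> \<gamma> \<theta> \<xi> (Suc k) =
    (let (xp, xk, mp) = alg1 G q x0 \<eta> \<gamma> \<theta> \<xi> k;
         g = (\<lambda>t. if k = 0 then 1 else \<gamma> (k - 1) t);
         th = (\<lambda>t. if k = 0 then 1 / real q else \<theta> (k - 1) t);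
         mk = (1 - (\<Sum>t=1..q. th t)) *\<^sub>R mp + (\<Sum>t=1..q. th t *\<^sub>R G (zpt (g t) xp xk) (\<xi> k))
     in (xk, xk - (\<eta> k / norm mk) *\<^sub>R mk, mk))"

definition alg1_x where
  "alg1_x G q x0 \<eta> \<gamma> \<theta> \<xi> k = fst (snd (alg1 G q x0 \<eta> \<gamma> \<theta> \<xi> k))"

definition alg1_m where
  "alg1_m G q x0 \<eta> \<gamma> \<theta> \<xi> k = snd (snd (alg1 G q x0 \<eta> \<gamma> \<theta> \<xi> (Suc k)))"

end

theory Submission
  imports Defs
begin

lemma mono_bound_pos:
  fixes h h' :: "real \<Rightarrow> real"
  assumes h0: "h 0 = 0" and der: "\<And>t. (h has_real_derivative h' t) (at t)"
    and bnd: "\<And>t. \<bar>h' t\<bar> \<le> c * \<bar>t\<bar>^n" and x: "0 \<le> x"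
  shows "\<bar>h x\<bar> \<le> c * \<bar>x\<bar>^(Suc n) / real (Suc n)"
proof -
  have d: "((\<lambda>t. c * t^(Suc n) / real (Suc n)) has_real_derivative c * t^n) (at t)" for t
  proof -
    have "((\<lambda>t. t^(Suc n)) has_real_derivative real (Suc n) * t^n) (at t)"
      using DERIV_pow[of "Suc n" t] by simp
    from DERIV_cdivide[OF DERIV_cmult[OF this, of c], of "real (Suc n)"]
    show ?thesis by simp
  qed
  have "(\<lambda>t. c * t^(Suc n) / real (Suc n) - h t) 0 \<le> (\<lambda>t. c * t^(Suc n) / real (Suc n) - h t) x"
    apply (rule DERIV_nonneg_imp_nondecreasing[OF x])
    apply (rule exI, rule conjI, rule DERIV_diff[OF d der])
    using bnd by (smt (verit) abs_of_nonneg zero_le_power)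
  moreover have "(\<lambda>t. c * t^(Suc n) / real (Suc n) + h t) 0 \<le> (\<lambda>t. c * t^(Suc n) / real (Suc n) + h t) x"
    apply (rule DERIV_nonneg_imp_nondecreasing[OF x])
    apply (rule exI, rule conjI, rule DERIV_add[OF d der])
    using bnd by (smt (verit) abs_of_nonneg zero_le_power)
  ultimately show ?thesis using h0 x by (simp add: abs_le_iff)
qed

lemma mono_bound:
  fixes h h' :: "real \<Rightarrow> real"
  assumes h0: "h 0 = 0" and der: "\<And>t. (h has_real_derivative h' t) (at t)"
    and bnd: "\<And>t. \<bar>h' t\<bar> \<le> c * \<bar>t\<bar>^n"
  shows "\<bar>h x\<bar> \<le> c * \<bar>x\<bar>^(Suc n) / real (Suc n)"
proof (cases "0 \<le> x")
  case True then show ?thesis using mono_bound_pos[OF h0 der bnd] by blast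
next
  case False
  have "\<bar>(\<lambda>t. h (-t)) (-x)\<bar> \<le> c * \<bar>-x\<bar>^(Suc n) / real (Suc n)"
    apply (rule mono_bound_pos[where h'="\<lambda>t. - h' (-t)"])
    using h0 apply simp
    using DERIV_mirror der apply blast
    using bnd apply (metis abs_minus_cancel abs_minus)
    using False by simp
  then show ?thesis by simp
qed

lemma taylor_lip:
  fixes D :: "nat \<Rightarrow> real \<Rightarrow> real"
  assumes "\<And>j t. j < N \<Longrightarrow> (D j has_real_derivative D (Suc j) t) (at t)"
    and "\<And>t. \<bar>D N t - D N 0\<bar> \<le> L * \<bar>t\<bar>"
  shows "\<bar>D 0 x - (\<Sum>j\<le>N. D j 0 * x^j / fact j)\<bar> \<le> L * \<bar>x\<bar>^(Suc N) / fact (Suc N)"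
  using assms
proof (induction N arbitrary: D x)
  case 0
  then show ?case by simp
next
  case (Suc N)
  define h where "h = (\<lambda>x. D 0 x - (\<Sum>j\<le>Suc N. D j 0 * x^j / fact j))"
  define h' where "h' = (\<lambda>x. D 1 x - (\<Sum>j\<le>N. D (Suc j) 0 * x^j / fact j))"
  have IH: "\<bar>h' x\<bar> \<le> L * \<bar>x\<bar>^(Suc N) / fact (Suc N)" for x
    unfolding h'_def using Suc.IH[of "\<lambda>j. D (Suc j)" x] Suc.prems by auto
  have sh: "(\<Sum>j\<le>Suc N. D j 0 * x^j / fact j) = D 0 0 + (\<Sum>j\<le>N. D (Suc j) 0 * x^(Suc j) / fact (Suc j))" for x
    by (subst sum.atMost_Suc_shift) simp
  have dsum: "((\<lambda>x. \<Sum>j\<le>N. D (Suc j) 0 * x^(Suc j) / fact (Suc j)) has_real_derivative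
       (\<Sum>j\<le>N. D (Suc j) 0 * x^j / fact j)) (at x)" for x
  proof -
    have "((\<lambda>x. \<Sum>j\<le>N. D (Suc j) 0 * x^(Suc j) / fact (Suc j)) has_real_derivative
       (\<Sum>j\<le>N. D (Suc j) 0 * (real (Suc j) * x^j) / fact (Suc j))) (at x)"
    proof (rule DERIV_sum)
      fix j
      have "((\<lambda>t. t^(Suc j)) has_real_derivative real (Suc j) * x^j) (at x)"
        using DERIV_pow[of "Suc j" x] by simp
      from DERIV_cdivide[OF DERIV_cmult[OF this, of "D (Suc j) 0"], of "fact (Suc j)"]
      show "((\<lambda>x. D (Suc j) 0 * x^(Suc j) / fact (Suc j)) has_real_derivative
         D (Suc j) 0 * (real (Suc j) * x^j) / fact (Suc j)) (at x)" by simp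
    qed
    moreover have "(\<Sum>j\<le>N. D (Suc j) 0 * (real (Suc j) * x^j) / fact (Suc j)) = (\<Sum>j\<le>N. D (Suc j) 0 * x^j / fact j)"
      by (rule sum.cong) (auto simp: fact_Suc)
    ultimately show ?thesis by simp
  qed
  have der: "(h has_real_derivative h' x) (at x)" for x
  proof -
    have "((\<lambda>x. D 0 x - (D 0 0 + (\<Sum>j\<le>N. D (Suc j) 0 * x^(Suc j) / fact (Suc j)))) has_real_derivative
        D 1 x - (0 + (\<Sum>j\<le>N. D (Suc j) 0 * x^j / fact j))) (at x)"
      using Suc.prems(1)[of 0 x] dsum[of x] by (intro DERIV_diff DERIV_add DERIV_const) auto
    then show ?thesis unfolding h_def h'_def sh by simp
  qed
  have "\<bar>h x\<bar> \<le> (L / fact (Suc N)) * \<bar>x\<bar>^(Suc (Suc N)) / real (Suc (Suc N))"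
    by (rule mono_bound[where h'=h']) (use IH der in \<open>auto simp: h_def\<close>)
  also have "\<dots> = L * \<bar>x\<bar>^(Suc (Suc N)) / fact (Suc (Suc N))"
    by (simp add: fact_Suc[of "Suc N"] field_simps)
  finally show ?case by (simp add: h_def)
qed


lemma mom_poly:
  fixes \<theta> \<gamma> :: "nat \<Rightarrow> real"
  assumes fin: "finite T" and mom: "\<And>i. 1 \<le> i \<Longrightarrow> i \<le> j \<Longrightarrow> (\<Sum>t\<in>T. \<theta> t / \<gamma> t ^ i) = 1"
    and j: "1 \<le> j"
  shows "(\<Sum>t\<in>T. \<theta> t * (1 - 1 / \<gamma> t)^j) = (\<Sum>t\<in>T. \<theta> t) - 1"
proof -
  have e: "(1 - 1 / g)^j = (\<Sum>i\<le>j. of_nat (j choose i) * (- 1 / g)^i)" for g :: real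
    using binomial_ring[of "- 1 / g" 1 j] by simp
  have "(\<Sum>t\<in>T. \<theta> t * (1 - 1 / \<gamma> t)^j) = (\<Sum>t\<in>T. \<Sum>i\<le>j. \<theta> t * (of_nat (j choose i) * (- 1 / \<gamma> t)^i))"
    by (simp add: e sum_distrib_left)
  also have "\<dots> = (\<Sum>i\<le>j. \<Sum>t\<in>T. \<theta> t * (of_nat (j choose i) * (- 1 / \<gamma> t)^i))"
    by (rule sum.swap)
  also have "\<dots> = (\<Sum>i\<le>j. (-1)^i * of_nat (j choose i) * (\<Sum>t\<in>T. \<theta> t / \<gamma> t ^ i))"
    proof (rule sum.cong, simp)
    fix i assume "i \<in> {..j}"
    have "\<theta> t * (of_nat (j choose i) * (- 1 / \<gamma> t)^i) = (-1)^i * of_nat (j choose i) * (\<theta> t / \<gamma> t ^ i)" for t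
    proof -
      have "(- 1 / \<gamma> t)^i = (-1)^i / \<gamma> t ^ i" by (rule power_divide)
      then show ?thesis by simp
    qed
    then show "(\<Sum>t\<in>T. \<theta> t * (of_nat (j choose i) * (- 1 / \<gamma> t)^i)) = (-1)^i * of_nat (j choose i) * (\<Sum>t\<in>T. \<theta> t / \<gamma> t ^ i)"
      by (simp add: sum_distrib_left)
  qed
  also have "\<dots> = (\<Sum>i\<le>j. (-1)^i * of_nat (j choose i) * (if i = 0 then (\<Sum>t\<in>T. \<theta> t) else 1))"
    by (rule sum.cong) (auto simp: mom)
  also have "\<dots> = (\<Sum>t\<in>T. \<theta> t) + (\<Sum>i\<in>{1..j}. (-1)^i * of_nat (j choose i))"
  proof -
    have "{..j} = insert 0 {1..j}" by auto
    then show ?thesis by (simp add: sum.insert)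
  qed
  also have "(\<Sum>i\<in>{1..j}. (-1)^i * of_nat (j choose i)) = (-1::real)"
  proof -
    have "{..j} = insert 0 {1..j}" by auto
    then have "(\<Sum>i\<le>j. (-1)^i * of_nat (j choose i)) = 1 + (\<Sum>i\<in>{1..j}. (-1)^i * (of_nat (j choose i)::real))"
      by (simp add: sum.insert)
    with choose_alternating_sum[of j, where 'a=real] j show ?thesis by simp
  qed
  finally show ?thesis by simp
qed


lemma sum_sq_card:
  fixes a :: "'i \<Rightarrow> real"
  shows "(\<Sum>i\<in>I. a i)\<^sup>2 \<le> real (card I) * (\<Sum>i\<in>I. (a i)\<^sup>2)"
  using Cauchy_Schwarz_ineq_sum[of a "\<lambda>_. 1" I] by (simp add: mult.commute)

lemma (in prob_space) noise_bound:
  fixes Y :: "'i \<Rightarrow> 'a \<Rightarrow> 'b::euclidean_space" and A :: 'b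
  assumes fin: "finite T"
    and int: "\<And>t. t \<in> T \<Longrightarrow> integrable M (Y t)"
    and zero: "\<And>t. t \<in> T \<Longrightarrow> (\<integral>\<omega>. Y t \<omega> \<partial>M) = 0"
    and var: "\<And>t. t \<in> T \<Longrightarrow> (\<integral>\<^sup>+\<omega>. ennreal ((norm (Y t \<omega>))\<^sup>2) \<partial>M) \<le> ennreal (\<sigma>\<^sup>2)"
  shows "(\<integral>\<^sup>+\<omega>. ennreal ((norm (A + (\<Sum>t\<in>T. c t *\<^sub>R Y t \<omega>)))\<^sup>2) \<partial>M)
     \<le> ennreal ((norm A)\<^sup>2 + real (card T) * \<sigma>\<^sup>2 * (\<Sum>t\<in>T. (c t)\<^sup>2))"
proof -
  define F where "F = (\<lambda>\<omega>. (norm A)\<^sup>2 + 2 * (A \<bullet> (\<Sum>t\<in>T. c t *\<^sub>R Y t \<omega>))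
      + real (card T) * (\<Sum>t\<in>T. (c t)\<^sup>2 * (norm (Y t \<omega>))\<^sup>2))"
  have sq_int: "integrable M (\<lambda>\<omega>. (norm (Y t \<omega>))\<^sup>2)" and sq_le: "(\<integral>\<omega>. (norm (Y t \<omega>))\<^sup>2 \<partial>M) \<le> \<sigma>\<^sup>2"
    if t: "t \<in> T" for t
  proof -
    have meas: "(\<lambda>\<omega>. (norm (Y t \<omega>))\<^sup>2) \<in> borel_measurable M"
      using int[OF t] by measurable
    have lt: "(\<integral>\<^sup>+\<omega>. ennreal ((norm (Y t \<omega>))\<^sup>2) \<partial>M) < \<infinity>"
      using var[OF t] by (simp add: le_less_trans)
    show i: "integrable M (\<lambda>\<omega>. (norm (Y t \<omega>))\<^sup>2)"
      by (rule integrableI_bounded[OF meas]) (use lt in simp)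
    have "ennreal (\<integral>\<omega>. (norm (Y t \<omega>))\<^sup>2 \<partial>M) = (\<integral>\<^sup>+\<omega>. ennreal ((norm (Y t \<omega>))\<^sup>2) \<partial>M)"
      by (rule nn_integral_eq_integral[OF i, symmetric]) simp
    with var[OF t] have "ennreal (\<integral>\<omega>. (norm (Y t \<omega>))\<^sup>2 \<partial>M) \<le> ennreal (\<sigma>\<^sup>2)" by simp
    then show "(\<integral>\<omega>. (norm (Y t \<omega>))\<^sup>2 \<partial>M) \<le> \<sigma>\<^sup>2"
      by (auto simp add: ennreal_le_iff2)
  qed
  have ptw: "(norm (A + (\<Sum>t\<in>T. c t *\<^sub>R Y t \<omega>)))\<^sup>2 \<le> F \<omega>" for \<omega>
  proof -
    let ?E = "\<Sum>t\<in>T. c t *\<^sub>R Y t \<omega>"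
    have eq: "(norm (A + ?E))\<^sup>2 = (norm A)\<^sup>2 + 2 * (A \<bullet> ?E) + (norm ?E)\<^sup>2"
      by (simp add: power2_norm_eq_inner inner_add_left inner_add_right inner_commute)
    have "norm ?E \<le> (\<Sum>t\<in>T. \<bar>c t\<bar> * norm (Y t \<omega>))"
      by (rule order_trans[OF norm_sum]) simp
    then have "(norm ?E)\<^sup>2 \<le> (\<Sum>t\<in>T. \<bar>c t\<bar> * norm (Y t \<omega>))\<^sup>2"
      by (simp add: power_mono)
    also have "\<dots> \<le> real (card T) * (\<Sum>t\<in>T. (\<bar>c t\<bar> * norm (Y t \<omega>))\<^sup>2)"
      by (rule sum_sq_card)
    also have "\<dots> = real (card T) * (\<Sum>t\<in>T. (c t)\<^sup>2 * (norm (Y t \<omega>))\<^sup>2)"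
      by (simp add: power_mult_distrib)
    finally show ?thesis unfolding F_def eq by simp
  qed
  have iE: "integrable M (\<lambda>\<omega>. A \<bullet> (\<Sum>t\<in>T. c t *\<^sub>R Y t \<omega>))"
    using int by auto
  have zE: "(\<integral>\<omega>. A \<bullet> (\<Sum>t\<in>T. c t *\<^sub>R Y t \<omega>) \<partial>M) = 0"
  proof -
    have "(\<integral>\<omega>. (\<Sum>t\<in>T. c t *\<^sub>R Y t \<omega>) \<partial>M) = (\<Sum>t\<in>T. c t *\<^sub>R (\<integral>\<omega>. Y t \<omega> \<partial>M))"
      by (subst Bochner_Integration.integral_sum) (use int in auto)
    also have "\<dots> = 0" using zero by simp
    finally show ?thesis using int by simp
  qed
  have iS: "integrable M (\<lambda>\<omega>. (\<Sum>t\<in>T. (c t)\<^sup>2 * (norm (Y t \<omega>))\<^sup>2))"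
    using sq_int by auto
  have iF: "integrable M F"
    unfolding F_def using iE iS by auto
  have intF: "(\<integral>\<omega>. F \<omega> \<partial>M) = (norm A)\<^sup>2 + real (card T) * (\<Sum>t\<in>T. (c t)\<^sup>2 * (\<integral>\<omega>. (norm (Y t \<omega>))\<^sup>2 \<partial>M))"
    unfolding F_def using iE iS zE sq_int
    by (simp add: Bochner_Integration.integral_sum prob_space)
  have "(\<Sum>t\<in>T. (c t)\<^sup>2 * (\<integral>\<omega>. (norm (Y t \<omega>))\<^sup>2 \<partial>M)) \<le> (\<Sum>t\<in>T. (c t)\<^sup>2 * \<sigma>\<^sup>2)"
    by (rule sum_mono) (simp add: mult_left_mono sq_le)
  then have intF_le: "(\<integral>\<omega>. F \<omega> \<partial>M) \<le> (norm A)\<^sup>2 + real (card T) * \<sigma>\<^sup>2 * (\<Sum>t\<in>T. (c t)\<^sup>2)"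
    unfolding intF by (simp add: sum_distrib_right mult_left_mono mult.assoc mult.commute[of "\<sigma>\<^sup>2"])
  have Fnn: "0 \<le> F \<omega>" for \<omega> using ptw[of \<omega>] by (meson order_trans zero_le_power2)
  have "(\<integral>\<^sup>+\<omega>. ennreal ((norm (A + (\<Sum>t\<in>T. c t *\<^sub>R Y t \<omega>)))\<^sup>2) \<partial>M) \<le> (\<integral>\<^sup>+\<omega>. ennreal (F \<omega>) \<partial>M)"
    by (rule nn_integral_mono) (simp add: ptw ennreal_leI)
  also have "\<dots> = ennreal (\<integral>\<omega>. F \<omega> \<partial>M)"
    by (rule nn_integral_eq_integral[OF iF]) (simp add: Fnn)
  also have "\<dots> \<le> ennreal ((norm A)\<^sup>2 + real (card T) * \<sigma>\<^sup>2 * (\<Sum>t\<in>T. (c t)\<^sup>2))"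
    by (rule ennreal_leI[OF intF_le])
  finally show ?thesis .
qed


lemma hder_line:
  fixes f :: "'a::euclidean_space \<Rightarrow> real"
  assumes d: "(\<lambda>y. hder k f y hs) differentiable (at (a + \<tau> *\<^sub>R e))"
  shows "((\<lambda>\<tau>. hder k f (a + \<tau> *\<^sub>R e) hs) has_real_derivative hder (Suc k) f (a + \<tau> *\<^sub>R e) (e # hs)) (at \<tau>)"
proof -
  let ?g = "\<lambda>y. hder k f y hs"
  let ?F = "frechet_derivative ?g (at (a + \<tau> *\<^sub>R e))"
  have g: "(?g has_derivative ?F) (at (a + \<tau> *\<^sub>R e))"
    using d frechet_derivative_works by blast
  have l: "((\<lambda>\<tau>. a + \<tau> *\<^sub>R e) has_derivative (\<lambda>h. h *\<^sub>R e)) (at \<tau>)"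
    by (auto intro!: derivative_eq_intros)
  have c: "((\<lambda>\<tau>. ?g (a + \<tau> *\<^sub>R e)) has_derivative (\<lambda>h. ?F (h *\<^sub>R e))) (at \<tau>)"
    using diff_chain_at[OF l g] by (simp add: o_def)
  have lin: "linear ?F" using has_derivative_linear[OF g] .
  have "(\<lambda>h. ?F (h *\<^sub>R e)) = (\<lambda>h. ?F e * h)"
    using linear_scale[OF lin] by (auto simp: mult.commute)
  with c show ?thesis
    by (simp add: has_field_derivative_def)
qed


lemma sq_one_plus:
  fixes a :: "nat \<Rightarrow> real"
  assumes fin: "finite T" and z: "0 \<notin> T"
  shows "(1 + (\<Sum>t\<in>T. a t))\<^sup>2 \<le> real (Suc (card T)) * (1 + (\<Sum>t\<in>T. (a t)\<^sup>2))"
proof -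
  let ?a = "\<lambda>t. if t = 0 then 1 else a t"
  have e1: "(\<Sum>t\<in>insert 0 T. ?a t) = 1 + (\<Sum>t\<in>T. a t)"
    using fin z by (simp add: sum.insert) (rule sum.cong, auto)
  have e2: "(\<Sum>t\<in>insert 0 T. (?a t)\<^sup>2) = 1 + (\<Sum>t\<in>T. (a t)\<^sup>2)"
    using fin z by (simp add: sum.insert) (rule sum.cong, auto)
  have "card (insert 0 T) = Suc (card T)" using fin z by simp
  with sum_sq_card[of ?a "insert 0 T"] e1 e2 show ?thesis by simp
qed

lemma conv_sq:
  fixes d b :: "'a::real_inner"
  assumes "0 < s" "s \<le> 1"
  shows "(norm ((1 - s) *\<^sub>R d + b))\<^sup>2 \<le> (1 - s) * (norm d)\<^sup>2 + (norm b)\<^sup>2 / s"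
proof -
  define N where "N = (norm d)\<^sup>2"
  define Q where "Q = (norm b)\<^sup>2"
  define P where "P = d \<bullet> b"
  have 1: "(norm ((1 - s) *\<^sub>R d + b))\<^sup>2 = (1-s)^2 * N + 2 * (1-s) * P + Q"
    unfolding N_def P_def Q_def
    apply (simp only: power2_norm_eq_inner inner_add_left inner_add_right inner_scaleR_left inner_scaleR_right)
    apply (simp add: inner_commute algebra_simps power2_eq_square)
    done
  have 2: "(norm (s *\<^sub>R d - b))\<^sup>2 = s^2 * N - 2 * s * P + Q"
    unfolding N_def P_def Q_def
    apply (simp only: power2_norm_eq_inner inner_diff_left inner_diff_right inner_scaleR_left inner_scaleR_right)
    apply (simp add: inner_commute algebra_simps power2_eq_square)
    done
  have 3: "0 \<le> (1 - s) / s * (s^2 * N - 2 * s * P + Q)" using assms 2[symmetric] by simp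
  have 4: "(1 - s) * N + Q / s - ((1-s)^2 * N + 2 * (1-s) * P + Q) = (1 - s) / s * (s^2 * N - 2 * s * P + Q)"
    using assms by (simp add: field_simps power2_eq_square) 
  show ?thesis unfolding 1 N_def[symmetric] Q_def[symmetric] using 3 4 by linarith
qed

lemma b_bound:
  fixes f :: "'a::euclidean_space \<Rightarrow> real" and gf :: "'a \<Rightarrow> 'a" and \<theta> \<gamma> :: "nat \<Rightarrow> real"
  assumes GD: "\<And>x. GDERIV f x :> gf x"
    and B: "assumption_B p Lp f"
    and e: "norm e = 1" and eta: "0 \<le> \<eta>"
    and gam: "\<And>t. 1 \<le> t \<Longrightarrow> t \<le> p - 1 \<Longrightarrow> 0 < \<gamma> t \<and> \<gamma> t < 1"
    and mom: "\<And>j. 1 \<le> j \<Longrightarrow> j \<le> p - 1 \<Longrightarrow> (\<Sum>t=1..p-1. \<theta> t / \<gamma> t ^ j) = 1"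
    and S: "0 \<le> (\<Sum>t=1..p-1. \<theta> t)" "(\<Sum>t=1..p-1. \<theta> t) \<le> 1"
  shows "(norm ((1 - (\<Sum>t=1..p-1. \<theta> t)) *\<^sub>R (gf (a + \<eta> *\<^sub>R e) - gf a)
            + (\<Sum>t=1..p-1. \<theta> t *\<^sub>R (gf (a + ((1 - 1 / \<gamma> t) * \<eta>) *\<^sub>R e) - gf a))))\<^sup>2
     \<le> real p * Lp\<^sup>2 * \<eta> ^ (2*p) / (fact p)\<^sup>2 * (1 + (\<Sum>t=1..p-1. (\<theta> t)\<^sup>2 / \<gamma> t ^ (2*p)))"
proof -
  let ?T = "{1..p-1}"
  let ?S = "\<Sum>t=1..p-1. \<theta> t"
  define b where "b = (1 - ?S) *\<^sub>R (gf (a + \<eta> *\<^sub>R e) - gf a)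
            + (\<Sum>t=1..p-1. \<theta> t *\<^sub>R (gf (a + ((1 - 1 / \<gamma> t) * \<eta>) *\<^sub>R e) - gf a))"
  define \<tau> where "\<tau> t = (1 - 1 / \<gamma> t) * \<eta>" for t
  from B have p2: "2 \<le> p" and pcd: "p_times_cont_diff p f" and Lp: "Lp > 0"
    and lip: "\<And>x y hs. length hs = p \<Longrightarrow> (\<forall>h\<in>set hs. norm h \<le> 1) \<Longrightarrow>
        hder p f y hs - hder p f x hs \<le> Lp * norm (y - x)"
    unfolding assumption_B_def by auto
  have diffb: "\<And>k hs x. k < p \<Longrightarrow> length hs = k \<Longrightarrow> (\<lambda>y. hder k f y hs) differentiable (at x)"
    using pcd unfolding p_times_cont_diff_def by blast
  have RHSnn: "0 \<le> real p * Lp\<^sup>2 * \<eta> ^ (2*p) / (fact p)\<^sup>2 * (1 + (\<Sum>t=1..p-1. (\<theta> t)\<^sup>2 / \<gamma> t ^ (2*p)))"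
  proof -
    have "0 \<le> (\<Sum>t=1..p-1. (\<theta> t)\<^sup>2 / \<gamma> t ^ (2*p))"
      by (rule sum_nonneg) (use gam in auto)
    then show ?thesis using eta by simp
  qed
  show ?thesis
  proof (cases "b = 0")
    case True
    then show ?thesis using RHSnn unfolding b_def by simp
  next
    case False
    define u where "u = b /\<^sub>R norm b"
    have nu: "norm u = 1" using False by (simp add: u_def)
    have bu: "b \<bullet> u = norm b" using False
      by (simp add: u_def power2_norm_eq_inner[symmetric] power2_eq_square)
    define D where "D j x = hder (Suc j) f (a + x *\<^sub>R e) (replicate j e @ [u])" for j x
    have D0: "D 0 x = gf (a + x *\<^sub>R e) \<bullet> u" for x
    proof -
      have "(f has_derivative (\<lambda>h. h \<bullet> gf (a + x *\<^sub>R e))) (at (a + x *\<^sub>R e))"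
        using GD[of "a + x *\<^sub>R e"] by (simp add: gderiv_def)
      from frechet_derivative_at[OF this]
      have "frechet_derivative f (at (a + x *\<^sub>R e)) = (\<lambda>h. h \<bullet> gf (a + x *\<^sub>R e))" by simp
      then show ?thesis by (simp add: D_def inner_commute)
    qed
    have Dder: "(D j has_real_derivative D (Suc j) x) (at x)" if "j < p - 1" for j x
    proof -
      have "((\<lambda>x. hder (Suc j) f (a + x *\<^sub>R e) (replicate j e @ [u])) has_real_derivative
             hder (Suc (Suc j)) f (a + x *\<^sub>R e) (e # (replicate j e @ [u]))) (at x)"
        by (rule hder_line, rule diffb) (use that in auto)
      then show ?thesis by (simp add: D_def[abs_def] D_def)
    qed
    have Dlip: "\<bar>D (p-1) x - D (p-1) 0\<bar> \<le> Lp * \<bar>x\<bar>" for x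
    proof -
      have sp: "Suc (p - 1) = p" using p2 by simp
      let ?hs = "replicate (p-1) e @ [u]"
      have l: "length ?hs = p" using p2 by simp
      have n: "\<forall>h\<in>set ?hs. norm h \<le> 1" using e nu by auto
      have Dp: "D (p-1) y = hder p f (a + y *\<^sub>R e) ?hs" for y unfolding D_def sp ..
      have "D (p-1) x - D (p-1) 0 \<le> Lp * \<bar>x\<bar>"
        using lip[OF l n, of "a + x *\<^sub>R e" a] e unfolding Dp by simp
      moreover have "D (p-1) 0 - D (p-1) x \<le> Lp * \<bar>x\<bar>"
        using lip[OF l n, of a "a + x *\<^sub>R e"] e unfolding Dp by simp
      ultimately show ?thesis by linarith
    qed
    define P where "P x = (\<Sum>j\<le>p-1. D j 0 * x^j / fact j)" for x
    define R where "R x = D 0 x - P x" for x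
    have Rb: "\<bar>R x\<bar> \<le> Lp * \<bar>x\<bar>^p / fact p" for x
      using taylor_lip[of "p-1" D Lp x, OF Dder Dlip] p2 by (simp add: R_def P_def)
    have atm: "{..p-1} = insert 0 {1..p-1}" by auto
    have P0: "P x - P 0 = (\<Sum>j\<in>{1..p-1}. D j 0 * x^j / fact j)" for x
      unfolding P_def atm by (simp add: sum.insert)
    have R0: "R 0 = 0"
      unfolding R_def P_def atm by (simp add: sum.insert)
    have key: "(1 - ?S) * (P \<eta> - P 0) + (\<Sum>t\<in>?T. \<theta> t * (P (\<tau> t) - P 0)) = 0"
    proof -
      have "(\<Sum>t\<in>?T. \<theta> t * (P (\<tau> t) - P 0))
          = (\<Sum>t\<in>?T. \<Sum>j\<in>?T. D j 0 * \<eta>^j / fact j * (\<theta> t * (1 - 1 / \<gamma> t)^j))"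
        unfolding P0 \<tau>_def by (simp add: sum_distrib_left power_mult_distrib mult_ac)
      also have "\<dots> = (\<Sum>j\<in>?T. D j 0 * \<eta>^j / fact j * (\<Sum>t\<in>?T. \<theta> t * (1 - 1 / \<gamma> t)^j))"
        by (subst sum.swap) (simp add: sum_distrib_left)
      also have "\<dots> = (\<Sum>j\<in>?T. D j 0 * \<eta>^j / fact j * (?S - 1))"
      proof (rule sum.cong, simp)
        fix j assume j: "j \<in> ?T"
        have "(\<Sum>t\<in>?T. \<theta> t * (1 - 1 / \<gamma> t)^j) = ?S - 1"
          by (rule mom_poly) (use j mom in \<open>auto\<close>)
        then show "D j 0 * \<eta>^j / fact j * (\<Sum>t\<in>?T. \<theta> t * (1 - 1 / \<gamma> t)^j) = D j 0 * \<eta>^j / fact j * (?S - 1)"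
          by simp
      qed
      also have "\<dots> = (\<Sum>j\<in>?T. D j 0 * \<eta>^j / fact j) * (?S - 1)"
        by (rule sum_distrib_right[symmetric])
      finally have h: "(\<Sum>t\<in>?T. \<theta> t * (P (\<tau> t) - P 0)) = (\<Sum>j\<in>?T. D j 0 * \<eta>^j / fact j) * (?S - 1)" .
      have h2: "P \<eta> - P 0 = (\<Sum>j\<in>?T. D j 0 * \<eta>^j / fact j)" by (rule P0)
      have z: "\<And>X S::real. (1 - S) * X + X * (S - 1) = 0" by (simp add: algebra_simps)
      show ?thesis unfolding h h2 by (rule z)
    qed
    have bu2: "b \<bullet> u = (1 - ?S) * R \<eta> + (\<Sum>t\<in>?T. \<theta> t * R (\<tau> t))"
    proof -
      have "b \<bullet> u = (1 - ?S) * (D 0 \<eta> - D 0 0) + (\<Sum>t\<in>?T. \<theta> t * (D 0 (\<tau> t) - D 0 0))"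
        unfolding b_def D0 \<tau>_def by (simp add: inner_add_left inner_diff_left inner_sum_left)
      also have "\<dots> = ((1 - ?S) * (P \<eta> - P 0) + (\<Sum>t\<in>?T. \<theta> t * (P (\<tau> t) - P 0)))
          + ((1 - ?S) * (R \<eta> - R 0) + (\<Sum>t\<in>?T. \<theta> t * (R (\<tau> t) - R 0)))"
      proof -
        have "(\<Sum>t\<in>?T. \<theta> t * (D 0 (\<tau> t) - D 0 0)) = (\<Sum>t\<in>?T. \<theta> t * (P (\<tau> t) - P 0)) + (\<Sum>t\<in>?T. \<theta> t * (R (\<tau> t) - R 0))"
          unfolding sum.distrib[symmetric] by (rule sum.cong) (auto simp: R_def algebra_simps)
        moreover have "(1 - ?S) * (D 0 \<eta> - D 0 0) = (1 - ?S) * (P \<eta> - P 0) + (1 - ?S) * (R \<eta> - R 0)"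
          by (simp add: R_def algebra_simps)
        ultimately show ?thesis by simp
      qed
      finally show ?thesis unfolding key R0 by simp
    qed
    define K where "K = Lp / fact p"
    have K: "0 \<le> K" using Lp by (simp add: K_def)
    have taub: "\<bar>\<tau> t\<bar>^p \<le> \<eta>^p / \<gamma> t ^ p" if "t \<in> ?T" for t
    proof -
      have g: "0 < \<gamma> t" "\<gamma> t < 1" using gam that by auto
      have t1: "\<tau> t = - ((1 / \<gamma> t - 1) * \<eta>)" by (simp add: \<tau>_def algebra_simps)
      have "1 \<le> 1 / \<gamma> t" using g by simp
      then have "0 \<le> (1 / \<gamma> t - 1) * \<eta>" using eta by simp
      then have "\<bar>\<tau> t\<bar> = (1 / \<gamma> t - 1) * \<eta>" unfolding t1 by simp
      also have "\<dots> \<le> \<eta> / \<gamma> t" using g eta by (simp add: field_simps)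
      finally have "\<bar>\<tau> t\<bar>^p \<le> (\<eta> / \<gamma> t)^p" by (simp add: power_mono)
      then show ?thesis by (simp add: power_divide)
    qed
    have "norm b = b \<bullet> u" using bu by simp
    also have "\<dots> \<le> (1 - ?S) * \<bar>R \<eta>\<bar> + (\<Sum>t\<in>?T. \<bar>\<theta> t\<bar> * \<bar>R (\<tau> t)\<bar>)"
    proof -
      have "(\<Sum>t\<in>?T. \<theta> t * R (\<tau> t)) \<le> (\<Sum>t\<in>?T. \<bar>\<theta> t\<bar> * \<bar>R (\<tau> t)\<bar>)"
        by (rule sum_mono) (metis abs_ge_self abs_mult)
      moreover have "(1 - ?S) * R \<eta> \<le> (1 - ?S) * \<bar>R \<eta>\<bar>" using S by (simp add: mult_left_mono)
      ultimately show ?thesis unfolding bu2 by linarith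
    qed
    also have "\<dots> \<le> 1 * (K * \<eta>^p) + (\<Sum>t\<in>?T. \<bar>\<theta> t\<bar> * (K * (\<eta>^p / \<gamma> t ^ p)))"
    proof (rule add_mono)
      have "\<bar>R \<eta>\<bar> \<le> K * \<eta>^p" using Rb[of \<eta>] eta by (simp add: K_def)
      then show "(1 - ?S) * \<bar>R \<eta>\<bar> \<le> 1 * (K * \<eta>^p)"
      proof -
        have "(1 - ?S) * \<bar>R \<eta>\<bar> \<le> 1 * \<bar>R \<eta>\<bar>" using S by (intro mult_right_mono) auto
        also have "\<dots> \<le> 1 * (K * \<eta>^p)" using \<open>\<bar>R \<eta>\<bar> \<le> K * \<eta>^p\<close> by simp
        finally show ?thesis .
      qed
      show "(\<Sum>t\<in>?T. \<bar>\<theta> t\<bar> * \<bar>R (\<tau> t)\<bar>) \<le> (\<Sum>t\<in>?T. \<bar>\<theta> t\<bar> * (K * (\<eta>^p / \<gamma> t ^ p)))"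
      proof (rule sum_mono)
        fix t assume t: "t \<in> ?T"
        have "\<bar>R (\<tau> t)\<bar> \<le> K * \<bar>\<tau> t\<bar>^p" using Rb[of "\<tau> t"] by (simp add: K_def)
        also have "\<dots> \<le> K * (\<eta>^p / \<gamma> t ^ p)" using mult_left_mono[OF taub[OF t] K] by simp
        finally show "\<bar>\<theta> t\<bar> * \<bar>R (\<tau> t)\<bar> \<le> \<bar>\<theta> t\<bar> * (K * (\<eta>^p / \<gamma> t ^ p))"
          by (rule mult_left_mono) simp
      qed
    qed
    also have "\<dots> = K * \<eta>^p * (1 + (\<Sum>t\<in>?T. \<bar>\<theta> t\<bar> / \<gamma> t ^ p))"
      by (simp add: sum_distrib_left algebra_simps)
    finally have nb: "norm b \<le> K * \<eta>^p * (1 + (\<Sum>t\<in>?T. \<bar>\<theta> t\<bar> / \<gamma> t ^ p))" .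
    have "(norm b)\<^sup>2 \<le> (K * \<eta>^p)\<^sup>2 * (1 + (\<Sum>t\<in>?T. \<bar>\<theta> t\<bar> / \<gamma> t ^ p))\<^sup>2"
      using power_mono[OF nb, of 2] by (simp add: power_mult_distrib)
    also have "\<dots> \<le> (K * \<eta>^p)\<^sup>2 * (real (Suc (card ?T)) * (1 + (\<Sum>t\<in>?T. (\<bar>\<theta> t\<bar> / \<gamma> t ^ p)\<^sup>2)))"
      by (rule mult_left_mono[OF sq_one_plus]) auto
    also have "real (Suc (card ?T)) = real p" using p2 by simp
    also have "(\<Sum>t\<in>?T. (\<bar>\<theta> t\<bar> / \<gamma> t ^ p)\<^sup>2) = (\<Sum>t\<in>?T. (\<theta> t)\<^sup>2 / \<gamma> t ^ (2*p))"
      by (rule sum.cong) (auto simp: power_divide power_mult[symmetric] mult.commute)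
    also have "(K * \<eta>^p)\<^sup>2 * (real p * (1 + (\<Sum>t\<in>?T. (\<theta> t)\<^sup>2 / \<gamma> t ^ (2*p))))
        = real p * Lp\<^sup>2 * \<eta> ^ (2*p) / (fact p)\<^sup>2 * (1 + (\<Sum>t=1..p-1. (\<theta> t)\<^sup>2 / \<gamma> t ^ (2*p)))"
      by (simp add: K_def power_mult_distrib power_divide power_mult[symmetric] mult.commute)
    finally show ?thesis unfolding b_def .
  qed
qed


lemma alg1_agree:
  "(\<And>j. j < n \<Longrightarrow> \<xi> j = \<xi>' j) \<Longrightarrow> alg1 G q x0 \<eta> \<gamma> \<theta> \<xi> n = alg1 G q x0 \<eta> \<gamma> \<theta> \<xi>' n"
proof (induction n)
  case 0 then show ?case by simp
next
  case (Suc n)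
  then have "alg1 G q x0 \<eta> \<gamma> \<theta> \<xi> n = alg1 G q x0 \<eta> \<gamma> \<theta> \<xi>' n" by simp
  moreover have "\<xi> n = \<xi>' n" using Suc.prems by simp
  ultimately show ?case by (simp only: alg1.simps)
qed

lemma alg1_Suc_struct:
  "alg1 G q x0 \<eta> \<gamma> \<theta> \<xi> (Suc k) =
    (alg1_x G q x0 \<eta> \<gamma> \<theta> \<xi> k,
     alg1_x G q x0 \<eta> \<gamma> \<theta> \<xi> k - (\<eta> k / norm (alg1_m G q x0 \<eta> \<gamma> \<theta> \<xi> k)) *\<^sub>R alg1_m G q x0 \<eta> \<gamma> \<theta> \<xi> k,
     alg1_m G q x0 \<eta> \<gamma> \<theta> \<xi> k)"
proof -
  obtain xp xk mp where e: "alg1 G q x0 \<eta> \<gamma> \<theta> \<xi> k = (xp, xk, mp)" by (cases "alg1 G q x0 \<eta> \<gamma> \<theta> \<xi> k") auto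
  show ?thesis unfolding alg1_m_def alg1_x_def by (simp add: e Let_def)
qed

theorem lemma3p6:
  fixes f :: "'a::euclidean_space \<Rightarrow> real" and gf :: "'a \<Rightarrow> 'a"
    and G :: "'a \<Rightarrow> 'b \<Rightarrow> 'a" and M :: "'b measure"
    and L1 Lp \<sigma> :: real and p :: nat and x0 :: 'a
    and \<eta> :: "nat \<Rightarrow> real" and \<gamma> \<theta> :: "nat \<Rightarrow> nat \<Rightarrow> real" and \<xi> :: "nat \<Rightarrow> 'b" and k :: nat
  assumes M: "prob_space M"
    and A: "assumption_A f gf G M L1 \<sigma>"
    and B: "assumption_B p Lp f"
    and eta: "\<And>k. \<eta> k > 0"
    and gam: "\<And>k t. 1 \<le> t \<Longrightarrow> t \<le> p - 1 \<Longrightarrow> 0 < \<gamma> k t \<and> \<gamma> k t < 1"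
    and mom: "\<And>k j. 1 \<le> j \<Longrightarrow> j \<le> p - 1 \<Longrightarrow> (\<Sum>t=1..p-1. \<theta> k t / \<gamma> k t ^ j) = 1"
    and thsum: "\<And>k. 0 < (\<Sum>t=1..p-1. \<theta> k t) \<and> (\<Sum>t=1..p-1. \<theta> k t) < 1"
    and xi: "\<And>k. \<xi> k \<in> space M"
  shows "(\<integral>\<^sup>+\<omega>. ennreal ((norm (alg1_m G (p-1) x0 \<eta> \<gamma> \<theta> (\<xi>(Suc k := \<omega>)) (Suc k)
                         - gf (alg1_x G (p-1) x0 \<eta> \<gamma> \<theta> \<xi> (Suc k))))\<^sup>2) \<partial>M)
       \<le> ennreal ((1 - (\<Sum>t=1..p-1. \<theta> k t)) * (norm (alg1_m G (p-1) x0 \<eta> \<gamma> \<theta> \<xi> k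
                         - gf (alg1_x G (p-1) x0 \<eta> \<gamma> \<theta> \<xi> k)))\<^sup>2
          + real p * Lp\<^sup>2 * \<eta> k ^ (2*p) / ((fact p)\<^sup>2 * (\<Sum>t=1..p-1. \<theta> k t))
              * (1 + (\<Sum>t=1..p-1. (\<theta> k t)\<^sup>2 / \<gamma> k t ^ (2*p)))
          + real (p - 1) * \<sigma>\<^sup>2 * (\<Sum>t=1..p-1. (\<theta> k t)\<^sup>2))"
proof -
  let ?q = "p - 1"
  let ?T = "{1..p-1}"
  let ?S = "\<Sum>t=1..p-1. \<theta> k t"
  interpret P: prob_space M by (rule M)
  from B have p2: "2 \<le> p" and Lp: "0 < Lp" unfolding assumption_B_def by auto
  from A have GD: "\<And>x. GDERIV f x :> gf x" and sig: "\<sigma> > 0"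
    and Aint: "\<And>x. integrable M (G x)" and Amean: "\<And>x. (\<integral>\<omega>. G x \<omega> \<partial>M) = gf x"
    and Avar: "\<And>x. (\<integral>\<^sup>+\<omega>. ennreal ((norm (G x \<omega> - gf x))\<^sup>2) \<partial>M) \<le> ennreal (\<sigma>\<^sup>2)"
    unfolding assumption_A_def by auto
  have S0: "0 < ?S" and S1: "?S < 1" using thsum[of k] by auto
  define X where "X = alg1_x G ?q x0 \<eta> \<gamma> \<theta> \<xi> k"
  define mk where "mk = alg1_m G ?q x0 \<eta> \<gamma> \<theta> \<xi> k"
  define X1 where "X1 = X - (\<eta> k / norm mk) *\<^sub>R mk"
  define z where "z t = zpt (\<gamma> k t) X X1" for t
  define Y where "Y t \<omega> = G (z t) \<omega> - gf (z t)" for t \<omega>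
  define d where "d = mk - gf X"
  define b where "b = (1 - ?S) *\<^sub>R (gf X - gf X1) + (\<Sum>t\<in>?T. \<theta> k t *\<^sub>R (gf (z t) - gf X1))"
  have st: "alg1 G ?q x0 \<eta> \<gamma> \<theta> \<xi> (Suc k) = (X, X1, mk)"
    unfolding X_def mk_def X1_def by (rule alg1_Suc_struct)
  have X1e: "alg1_x G ?q x0 \<eta> \<gamma> \<theta> \<xi> (Suc k) = X1"
    unfolding alg1_x_def st by simp
  have m': "alg1_m G ?q x0 \<eta> \<gamma> \<theta> (\<xi>(Suc k := \<omega>)) (Suc k)
      = (1 - ?S) *\<^sub>R mk + (\<Sum>t\<in>?T. \<theta> k t *\<^sub>R G (z t) \<omega>)" for \<omega>
  proof -
    have "alg1 G ?q x0 \<eta> \<gamma> \<theta> (\<xi>(Suc k := \<omega>)) (Suc k) = alg1 G ?q x0 \<eta> \<gamma> \<theta> \<xi> (Suc k)"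
      by (rule alg1_agree) simp
    then have st': "alg1 G ?q x0 \<eta> \<gamma> \<theta> (\<xi>(Suc k := \<omega>)) (Suc k) = (X, X1, mk)" using st by simp
    show ?thesis unfolding alg1_m_def alg1.simps(2)[of G ?q x0 \<eta> \<gamma> \<theta> "\<xi>(Suc k := \<omega>)" "Suc k"] st'
      by (simp add: Let_def z_def)
  qed
  have decomp: "alg1_m G ?q x0 \<eta> \<gamma> \<theta> (\<xi>(Suc k := \<omega>)) (Suc k) - gf X1
      = ((1 - ?S) *\<^sub>R d + b) + (\<Sum>t\<in>?T. \<theta> k t *\<^sub>R Y t \<omega>)" for \<omega>
  proof -
    have s1: "(\<Sum>t\<in>?T. \<theta> k t *\<^sub>R G (z t) \<omega>) = (\<Sum>t\<in>?T. \<theta> k t *\<^sub>R Y t \<omega>) + (\<Sum>t\<in>?T. \<theta> k t *\<^sub>R (gf (z t) - gf X1)) + ?S *\<^sub>R gf X1"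
      unfolding Y_def scaleR_sum_left sum.distrib[symmetric]
      by (rule sum.cong) (auto simp: algebra_simps)
    show ?thesis unfolding m' s1 d_def b_def by (simp add: algebra_simps)
  qed
  have noise: "(\<integral>\<^sup>+\<omega>. ennreal ((norm (((1 - ?S) *\<^sub>R d + b) + (\<Sum>t\<in>?T. \<theta> k t *\<^sub>R Y t \<omega>)))\<^sup>2) \<partial>M)
     \<le> ennreal ((norm ((1 - ?S) *\<^sub>R d + b))\<^sup>2 + real (card ?T) * \<sigma>\<^sup>2 * (\<Sum>t\<in>?T. (\<theta> k t)\<^sup>2))"
  proof (rule P.noise_bound)
    fix t
    show "integrable M (Y t)" unfolding Y_def[abs_def] using Aint by auto
    show "(\<integral>\<omega>. Y t \<omega> \<partial>M) = 0" unfolding Y_def using Aint Amean P.prob_space by simp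
    show "(\<integral>\<^sup>+\<omega>. ennreal ((norm (Y t \<omega>))\<^sup>2) \<partial>M) \<le> ennreal (\<sigma>\<^sup>2)" unfolding Y_def by (rule Avar)
  qed simp
  define Bb where "Bb = real p * Lp\<^sup>2 * \<eta> k ^ (2*p) / (fact p)\<^sup>2 * (1 + (\<Sum>t=1..p-1. (\<theta> k t)\<^sup>2 / \<gamma> k t ^ (2*p)))"
  have Bbnn: "0 \<le> Bb"
  proof -
    have "0 \<le> (\<Sum>t=1..p-1. (\<theta> k t)\<^sup>2 / \<gamma> k t ^ (2*p))"
      by (rule sum_nonneg) (use gam in auto)
    then show ?thesis using eta[of k] by (simp add: Bb_def)
  qed
  have bb: "(norm b)\<^sup>2 \<le> Bb"
  proof (cases "mk = 0")
    case True
    then have "X1 = X" "\<And>t. z t = X" by (auto simp: X1_def z_def zpt_def)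
    then have "b = 0" by (simp add: b_def)
    then show ?thesis using Bbnn by simp
  next
    case False
    define e where "e = mk /\<^sub>R norm mk"
    have ne: "norm e = 1" using False by (simp add: e_def)
    have XX: "X = X1 + \<eta> k *\<^sub>R e" using False by (simp add: X1_def e_def divide_inverse)
    have zz: "z t = X1 + ((1 - 1 / \<gamma> k t) * \<eta> k) *\<^sub>R e" if "t \<in> ?T" for t
    proof -
      have g: "\<gamma> k t \<noteq> 0" using gam[of t k] that by auto
      have "z t = X1 + ((1 - \<gamma> k t) / \<gamma> k t) *\<^sub>R (X1 - X)" by (simp add: z_def zpt_def)
      also have "X1 - X = (- \<eta> k) *\<^sub>R e" using XX by simp
      also have "((1 - \<gamma> k t) / \<gamma> k t) *\<^sub>R ((- \<eta> k) *\<^sub>R e) = (((1 - \<gamma> k t) / \<gamma> k t) * (- \<eta> k)) *\<^sub>R e"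
        by (rule scaleR_scaleR)
      also have "((1 - \<gamma> k t) / \<gamma> k t) * (- \<eta> k) = (1 - 1 / \<gamma> k t) * \<eta> k"
        using g by (simp add: field_simps)
      finally show ?thesis .
    qed
    have "b = (1 - ?S) *\<^sub>R (gf (X1 + \<eta> k *\<^sub>R e) - gf X1)
            + (\<Sum>t=1..p-1. \<theta> k t *\<^sub>R (gf (X1 + ((1 - 1 / \<gamma> k t) * \<eta> k) *\<^sub>R e) - gf X1))"
      unfolding b_def XX[symmetric] by (intro arg_cong2[where f="(+)"] refl sum.cong) (simp_all add: zz)
    also have "(norm \<dots>)\<^sup>2 \<le> Bb" unfolding Bb_def
      by (rule b_bound[OF GD B ne]) (use eta[of k] gam mom S0 S1 in auto)
    finally show ?thesis .
  qed
  have conv: "(norm ((1 - ?S) *\<^sub>R d + b))\<^sup>2 \<le> (1 - ?S) * (norm d)\<^sup>2 + (norm b)\<^sup>2 / ?S"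
    by (rule conv_sq) (use S0 S1 in auto)
  have cardT: "real (card ?T) = real (p - 1)" by simp
  have fin: "(norm ((1 - ?S) *\<^sub>R d + b))\<^sup>2 + real (card ?T) * \<sigma>\<^sup>2 * (\<Sum>t\<in>?T. (\<theta> k t)\<^sup>2)
     \<le> (1 - ?S) * (norm d)\<^sup>2
          + real p * Lp\<^sup>2 * \<eta> k ^ (2*p) / ((fact p)\<^sup>2 * ?S)
              * (1 + (\<Sum>t=1..p-1. (\<theta> k t)\<^sup>2 / \<gamma> k t ^ (2*p)))
          + real (p - 1) * \<sigma>\<^sup>2 * (\<Sum>t=1..p-1. (\<theta> k t)\<^sup>2)"
  proof -
    have "(norm b)\<^sup>2 / ?S \<le> Bb / ?S" using bb S0 by (simp add: divide_right_mono)
    also have "Bb / ?S = real p * Lp\<^sup>2 * \<eta> k ^ (2*p) / ((fact p)\<^sup>2 * ?S)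
              * (1 + (\<Sum>t=1..p-1. (\<theta> k t)\<^sup>2 / \<gamma> k t ^ (2*p)))"
      unfolding Bb_def by simp
    finally show ?thesis using conv unfolding cardT by linarith
  qed
  have "(\<integral>\<^sup>+\<omega>. ennreal ((norm (alg1_m G (p-1) x0 \<eta> \<gamma> \<theta> (\<xi>(Suc k := \<omega>)) (Suc k)
                         - gf (alg1_x G (p-1) x0 \<eta> \<gamma> \<theta> \<xi> (Suc k))))\<^sup>2) \<partial>M)
      = (\<integral>\<^sup>+\<omega>. ennreal ((norm (((1 - ?S) *\<^sub>R d + b) + (\<Sum>t\<in>?T. \<theta> k t *\<^sub>R Y t \<omega>)))\<^sup>2) \<partial>M)"
    unfolding X1e decomp ..
  also note noise
  also note ennreal_leI[OF fin]
  finally show ?thesis unfolding d_def X_def mk_def .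
qed

end
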